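(* Let $n\geq 2$ and $k\geq 3$. If $c$ is an exact $k$-coloring of $\mathcal{B}_n$ with no rainbow induced copy of $\mathcal{C}_3$, then $k\leq \binom{n}{\lceil n/2\rceil}+1$.
   Context: $\mathcal{B}_n$ denotes the Boolean lattice of all subsets of $[n]$ ordered by inclusion. An exact $k$-coloring of $\mathcal{B}_n$ is a surjective map $\mathcal{B}_n\to[k]$. A rainbow induced copy of $\mathcal{C}_3$ is a chain $X\subsetneq Y\subsetneq Z$ whose three sets have pairwise distinct colors. *)

theory Defs
  imports Main
begin

definition boolean_lattice :: "nat \<Rightarrow> nat set set" where
  "boolean_lattice n = Pow {1..n}"

definition exact_coloring :: "nat \<Rightarrow> nat \<Rightarrow> (nat set \<Rightarrow> nat) \<Rightarrow> bool" where
  "exact_coloring n k c \<longleftrightarrow> c ` boolean_lattice n = {1..k}"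

definition has_rainbow_C3 :: "nat \<Rightarrow> (nat set \<Rightarrow> nat) \<Rightarrow> bool" where
  "has_rainbow_C3 n c \<longleftrightarrow>
     (\<exists>X Y Z. X \<in> boolean_lattice n \<and> Y \<in> boolean_lattice n \<and> Z \<in> boolean_lattice n \<and>
              X \<subset> Y \<and> Y \<subset> Z \<and> c X \<noteq> c Y \<and> c Y \<noteq> c Z \<and> c X \<noteq> c Z)"

end

theory Submission
  imports Defs "HOL.Binomial_Plus"
begin

lemma lym_nat:
  assumes "card S = n" "finite S" "F \<subseteq> Pow S"
    and "\<forall>A\<in>F. \<forall>B\<in>F. A \<subseteq> B \<longrightarrow> A = B"
  shows "(\<Sum>A\<in>F. fact (card A) * fact (n - card A)) \<le> (fact n :: nat)"
  using assms
proof (induction n arbitrary: S F)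
  case 0
  then have "S = {}" by auto
  then have "F \<subseteq> {{}}" using 0 by auto
  then have "F = {} \<or> F = {{}}" by auto
  then show ?case by auto
next
  case (Suc n)
  have finF: "finite F" using finite_subset[OF Suc.prems(3)] Suc.prems(2) by simp
  show ?case
  proof (cases "S \<in> F")
    case True
    then have "F = {S}" using Suc.prems(3,4) by blast
    then show ?thesis using Suc.prems(1) by simp
  next
    case False
    define g :: "'a set \<Rightarrow> nat" where "g A = fact (card A) * fact (n - card A)" for A
    have IH: "(\<Sum>A\<in>{A\<in>F. x \<notin> A}. g A) \<le> fact n" if "x \<in> S" for x
    proof -
      have "card (S - {x}) = n" using Suc.prems(1,2) that by simp
      moreover have "{A\<in>F. x \<notin> A} \<subseteq> Pow (S - {x})" using Suc.prems(3) by auto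
      ultimately show ?thesis unfolding g_def
        using Suc.IH[of "S - {x}" "{A\<in>F. x \<notin> A}"] Suc.prems(2,4) by auto
    qed
    have "(\<Sum>x\<in>S. \<Sum>A\<in>{A\<in>F. x \<notin> A}. g A) \<le> (\<Sum>x\<in>S. fact n)"
      by (rule sum_mono) (use IH in auto)
    also have "\<dots> = fact (Suc n)" using Suc.prems(1) by (simp add: fact_Suc)
    finally have le: "(\<Sum>x\<in>S. \<Sum>A\<in>{A\<in>F. x \<notin> A}. g A) \<le> fact (Suc n)" .
    have "(\<Sum>x\<in>S. \<Sum>A\<in>{A\<in>F. x \<notin> A}. g A) = (\<Sum>A\<in>F. \<Sum>x\<in>{x\<in>S. x \<notin> A}. g A)"
      by (rule sum.swap_restrict) (use finF Suc.prems(2) in auto)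
    also have "\<dots> = (\<Sum>A\<in>F. fact (card A) * fact (Suc n - card A))"
    proof (rule sum.cong)
      fix A assume A: "A \<in> F"
      have sub: "A \<subseteq> S" "A \<noteq> S" using A Suc.prems(3) False by auto
      have finA: "finite A" using sub Suc.prems(2) finite_subset by blast
      have cA: "card A < Suc n" using psubset_card_mono[OF Suc.prems(2)] sub Suc.prems(1) by auto
      have "{x\<in>S. x \<notin> A} = S - A" by auto
      then have "card {x\<in>S. x \<notin> A} = Suc n - card A"
        using card_Diff_subset[OF finA sub(1)] Suc.prems(1) by simp
      moreover have "Suc n - card A = Suc (n - card A)" using cA by simp
      ultimately show "(\<Sum>x\<in>{x\<in>S. x \<notin> A}. g A) = fact (card A) * fact (Suc n - card A)"
        by (simp add: g_def fact_Suc algebra_simps)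
    qed simp
    finally show ?thesis using le by simp
  qed
qed

lemma sperner_nat:
  assumes "card S = n" "finite S" "F \<subseteq> Pow S"
    and "\<forall>A\<in>F. \<forall>B\<in>F. A \<subseteq> B \<longrightarrow> A = B"
  shows "card F \<le> n choose (n div 2)"
proof -
  define M where "M = n choose (n div 2)"
  define N :: nat where "N = fact n"
  have "card F * N = (\<Sum>A\<in>F. N)" by simp
  also have "\<dots> \<le> (\<Sum>A\<in>F. fact (card A) * fact (n - card A) * M)"
  proof (rule sum_mono)
    fix A assume "A \<in> F"
    then have "A \<subseteq> S" using assms(3) by blast
    then have "card A \<le> n" using card_mono[OF assms(2)] assms(1) by simp
    then have "N = fact (card A) * fact (n - card A) * (n choose card A)"
      unfolding N_def by (rule binomial_fact_lemma[symmetric])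
    also have "\<dots> \<le> fact (card A) * fact (n - card A) * M"
      unfolding M_def by (rule mult_left_mono[OF binomial_maximum]) simp
    finally show "N \<le> fact (card A) * fact (n - card A) * M" .
  qed
  also have "\<dots> = (\<Sum>A\<in>F. fact (card A) * fact (n - card A)) * M"
    by (rule sum_distrib_right[symmetric])
  also have "\<dots> \<le> N * M"
    using lym_nat[OF assms] unfolding N_def by (rule mult_right_mono) simp
  finally have "card F * N \<le> M * N" by (simp only: mult.commute)
  moreover have "N > 0" unfolding N_def by simp
  ultimately show ?thesis unfolding M_def[symmetric] by simp
qed

theorem corollary2p2:
  fixes n k :: nat and c :: "nat set \<Rightarrow> nat"
  assumes "n \<ge> 2" and "k \<ge> 3"
    and "exact_coloring n k c"
    and "\<not> has_rainbow_C3 n c"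
  shows "k \<le> (n choose ((n + 1) div 2)) + 1"
proof -
  have img: "c ` Pow {1..n} = {1..k}" using assms(3) by (simp add: exact_coloring_def boolean_lattice_def)
  have nr: "\<And>X Y Z. X \<subseteq> {1..n} \<Longrightarrow> Y \<subseteq> {1..n} \<Longrightarrow> Z \<subseteq> {1..n} \<Longrightarrow> X \<subset> Y \<Longrightarrow> Y \<subset> Z
     \<Longrightarrow> c X = c Y \<or> c Y = c Z \<or> c X = c Z"
    using assms(4) unfolding has_rainbow_C3_def boolean_lattice_def by blast
  let ?a = "c {}"
  have eq: "c {1..n} = ?a"
  proof (rule ccontr)
    assume ne: "c {1..n} \<noteq> ?a"
    have "c ` Pow {1..n} \<subseteq> {?a, c {1..n}}"
    proof
      fix y assume "y \<in> c ` Pow {1..n}"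
      then obtain Y where Y: "Y \<subseteq> {1..n}" "y = c Y" by auto
      show "y \<in> {?a, c {1..n}}"
      proof (cases "Y = {} \<or> Y = {1..n}")
        case True then show ?thesis using Y by auto
      next
        case False
        then have "{} \<subset> Y" "Y \<subset> {1..n}" using Y by auto
        then show ?thesis using nr[of "{}" Y "{1..n}"] Y ne by auto
      qed
    qed
    then have "card {1..k} \<le> card {?a, c {1..n}}" using img by (metis card_mono finite.emptyI finite.insertI)
    also have "\<dots> \<le> 2" by (simp add: card_insert_if)
    finally show False using assms(2) by simp
  qed
  define I where "I = {1..k} - {?a}"
  have "\<forall>i\<in>I. \<exists>S. S \<subseteq> {1..n} \<and> c S = i" using img I_def by (metis DiffD1 imageE PowD)
  then obtain S where S: "\<And>i. i \<in> I \<Longrightarrow> S i \<subseteq> {1..n} \<and> c (S i) = i" by metis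
  have inj: "inj_on S I" by (rule inj_onI) (metis S)
  have anti: "\<forall>A\<in>S ` I. \<forall>B\<in>S ` I. A \<subseteq> B \<longrightarrow> A = B"
  proof (intro ballI impI)
    fix A B assume A: "A \<in> S ` I" and B: "B \<in> S ` I" and AB: "A \<subseteq> B"
    obtain i j where ij: "i \<in> I" "j \<in> I" "A = S i" "B = S j" using A B by auto
    show "A = B"
    proof (rule ccontr)
      assume "A \<noteq> B"
      then have ne: "i \<noteq> j" using ij by auto
      have "A \<noteq> {}" using S[OF ij(1)] ij I_def by auto
      then have "{} \<subset> A" "A \<subset> B" using AB \<open>A \<noteq> B\<close> by auto
      then show False using nr[of "{}" A B] S[OF ij(1)] S[OF ij(2)] ij ne I_def by auto
    qed
  qed
  have "card (S ` I) \<le> n choose (n div 2)"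
    by (rule sperner_nat[of "{1..n}"]) (use S anti in auto)
  moreover have "card (S ` I) = card I" using card_image[OF inj] .
  moreover have "card I \<ge> k - 1" unfolding I_def
    using diff_card_le_card_Diff[of "{?a}" "{1..k}"] by simp
  moreover have "n choose ((n + 1) div 2) = n choose (n div 2)"
  proof -
    have "(n + 1) div 2 \<le> n" "n - (n + 1) div 2 = n div 2" by auto
    then show ?thesis using binomial_symmetric by metis
  qed
  ultimately show ?thesis by linarith
qed

end
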